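(* Let $n$ be a natural number and let $(L_x)_{x\in S}$ be an $S$-glued system in which every $L_x$ is semimodular of breadth at most $n$. Then its $S$-glued sum $L$ is semimodular and has breadth at most $n$.
   Context: Let $S$ be a lattice of finite length (every chain in $S$ is finite), with order $\le$, join $\vee$ and meet $\wedge$; $x\prec y$ means that $y$ covers $x$. An \emph{$S$-glued system} is a family $(L_x,\le_x)_{x\in S}$ of lattices of finite length (with join $+_x$, meet $\cdot_x$, least element $0_x$, greatest element $1_x$), whose underlying sets may overlap, such that for all $x,y\in S$: (1) if $x\le y$ and $L_x\cap L_y\ne\emptyset$, then $L_x\cap L_y$ is a filter of $L_x$ and an ideal of $L_y$; (2) in the situation of (1), for all $a,b\in L_x\cap L_y$: $a\le_x b$ iff $a\le_y b$; (3) if $x\prec y$ then $L_x\cap L_y\ne\emptyset$; (4) $L_x\cap L_y\subseteq L_{x\wedge y}\cap L_{x\vee y}$. The \emph{$S$-glued sum} of the system is the set $L=\bigcup_{x\in S}L_x$ equipped with the relation $\le$ defined as the transitive closure of $\bigcup_{x\in S}\le_x$; it is a lattice. A lattice $K$ of finite length is \emph{semimodular} if whenever $b\ne c$ both cover $a$ in $K$, then $b\vee c$ covers both $b$ and $c$. The \emph{breadth} of a lattice $K$ is the supremum of all $m$ for which there is a map $\varphi$ from the Boolean lattice $\mathbf{2}^m$ (all subsets of an $m$-element set) into $K$ with $\varphi(a)\le\varphi(b)\iff a\le b$ for all $a,b$. *)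

theory Defs
  imports Main
begin

text \<open>Posets and lattices given by a carrier set A and an order relation le on it.
  Several such structures may live in one ambient type and have overlapping carriers.\<close>

definition partial_order_on' :: "'a set \<Rightarrow> ('a \<Rightarrow> 'a \<Rightarrow> bool) \<Rightarrow> bool" where
  "partial_order_on' A le \<longleftrightarrow>
     (\<forall>a\<in>A. le a a) \<and>
     (\<forall>a\<in>A. \<forall>b\<in>A. le a b \<and> le b a \<longrightarrow> a = b) \<and>
     (\<forall>a\<in>A. \<forall>b\<in>A. \<forall>c\<in>A. le a b \<and> le b c \<longrightarrow> le a c)"

definition is_lub :: "'a set \<Rightarrow> ('a \<Rightarrow> 'a \<Rightarrow> bool) \<Rightarrow> 'a \<Rightarrow> 'a \<Rightarrow> 'a \<Rightarrow> bool" where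
  "is_lub A le a b j \<longleftrightarrow> j \<in> A \<and> le a j \<and> le b j \<and>
     (\<forall>u\<in>A. le a u \<and> le b u \<longrightarrow> le j u)"

definition is_glb :: "'a set \<Rightarrow> ('a \<Rightarrow> 'a \<Rightarrow> bool) \<Rightarrow> 'a \<Rightarrow> 'a \<Rightarrow> 'a \<Rightarrow> bool" where
  "is_glb A le a b m \<longleftrightarrow> m \<in> A \<and> le m a \<and> le m b \<and>
     (\<forall>u\<in>A. le u a \<and> le u b \<longrightarrow> le u m)"

definition is_lattice_on :: "'a set \<Rightarrow> ('a \<Rightarrow> 'a \<Rightarrow> bool) \<Rightarrow> bool" where
  "is_lattice_on A le \<longleftrightarrow> partial_order_on' A le \<and>
     (\<forall>a\<in>A. \<forall>b\<in>A. (\<exists>j. is_lub A le a b j) \<and> (\<exists>m. is_glb A le a b m))"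

definition finite_length_on :: "'a set \<Rightarrow> ('a \<Rightarrow> 'a \<Rightarrow> bool) \<Rightarrow> bool" where
  "finite_length_on A le \<longleftrightarrow>
     (\<forall>C. C \<subseteq> A \<and> (\<forall>a\<in>C. \<forall>b\<in>C. le a b \<or> le b a) \<longrightarrow> finite C)"

text \<open>A (nonempty, hence bounded) lattice of finite length.\<close>
definition fl_lattice :: "'a set \<Rightarrow> ('a \<Rightarrow> 'a \<Rightarrow> bool) \<Rightarrow> bool" where
  "fl_lattice A le \<longleftrightarrow> A \<noteq> {} \<and> is_lattice_on A le \<and> finite_length_on A le"

definition covers_in :: "'a set \<Rightarrow> ('a \<Rightarrow> 'a \<Rightarrow> bool) \<Rightarrow> 'a \<Rightarrow> 'a \<Rightarrow> bool" where
  "covers_in A le a b \<longleftrightarrow> a \<in> A \<and> b \<in> A \<and> le a b \<and> a \<noteq> b \<and>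
     \<not> (\<exists>c\<in>A. le a c \<and> le c b \<and> c \<noteq> a \<and> c \<noteq> b)"

definition semimodular_on :: "'a set \<Rightarrow> ('a \<Rightarrow> 'a \<Rightarrow> bool) \<Rightarrow> bool" where
  "semimodular_on A le \<longleftrightarrow>
     (\<forall>a b c j. covers_in A le a b \<and> covers_in A le a c \<and> b \<noteq> c \<and> is_lub A le b c j
        \<longrightarrow> covers_in A le b j \<and> covers_in A le c j)"

definition breadth_le :: "'a set \<Rightarrow> ('a \<Rightarrow> 'a \<Rightarrow> bool) \<Rightarrow> nat \<Rightarrow> bool" where
  "breadth_le A le n \<longleftrightarrow>
     (\<forall>m (\<phi> :: nat set \<Rightarrow> 'a).
        (\<forall>X. X \<subseteq> {0..<m} \<longrightarrow> \<phi> X \<in> A) \<and>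
        (\<forall>X Y. X \<subseteq> {0..<m} \<and> Y \<subseteq> {0..<m} \<longrightarrow> (le (\<phi> X) (\<phi> Y) \<longleftrightarrow> X \<subseteq> Y))
        \<longrightarrow> m \<le> n)"

definition is_filter_on :: "'a set \<Rightarrow> ('a \<Rightarrow> 'a \<Rightarrow> bool) \<Rightarrow> 'a set \<Rightarrow> bool" where
  "is_filter_on A le F \<longleftrightarrow> F \<subseteq> A \<and> F \<noteq> {} \<and>
     (\<forall>a\<in>F. \<forall>b\<in>A. le a b \<longrightarrow> b \<in> F) \<and>
     (\<forall>a\<in>F. \<forall>b\<in>F. \<forall>m. is_glb A le a b m \<longrightarrow> m \<in> F)"

definition is_ideal_on :: "'a set \<Rightarrow> ('a \<Rightarrow> 'a \<Rightarrow> bool) \<Rightarrow> 'a set \<Rightarrow> bool" where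
  "is_ideal_on A le I \<longleftrightarrow> I \<subseteq> A \<and> I \<noteq> {} \<and>
     (\<forall>a\<in>I. \<forall>b\<in>A. le b a \<longrightarrow> b \<in> I) \<and>
     (\<forall>a\<in>I. \<forall>b\<in>I. \<forall>j. is_lub A le a b j \<longrightarrow> j \<in> I)"

definition finite_length_type :: "'b::lattice itself \<Rightarrow> bool" where
  "finite_length_type _ \<longleftrightarrow>
     (\<forall>C::'b set. (\<forall>x\<in>C. \<forall>y\<in>C. x \<le> y \<or> y \<le> x) \<longrightarrow> finite C)"

definition covers_S :: "'b::order \<Rightarrow> 'b \<Rightarrow> bool" where
  "covers_S x y \<longleftrightarrow> x < y \<and> \<not> (\<exists>z. x < z \<and> z < y)"

definition glued_system :: "('b::lattice \<Rightarrow> 'a set) \<Rightarrow> ('b \<Rightarrow> 'a \<Rightarrow> 'a \<Rightarrow> bool) \<Rightarrow> bool" where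
  "glued_system L R \<longleftrightarrow>
     finite_length_type TYPE('b) \<and>
     (\<forall>x. fl_lattice (L x) (R x)) \<and>
     (\<forall>x y. x \<le> y \<and> L x \<inter> L y \<noteq> {} \<longrightarrow>
        is_filter_on (L x) (R x) (L x \<inter> L y) \<and> is_ideal_on (L y) (R y) (L x \<inter> L y)) \<and>
     (\<forall>x y. x \<le> y \<and> L x \<inter> L y \<noteq> {} \<longrightarrow>
        (\<forall>a\<in>L x \<inter> L y. \<forall>b\<in>L x \<inter> L y. R x a b \<longleftrightarrow> R y a b)) \<and>
     (\<forall>x y. covers_S x y \<longrightarrow> L x \<inter> L y \<noteq> {}) \<and>
     (\<forall>x y. L x \<inter> L y \<subseteq> L (inf x y) \<inter> L (sup x y))"

definition glued_carrier :: "('b \<Rightarrow> 'a set) \<Rightarrow> 'a set" where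
  "glued_carrier L = (\<Union>x. L x)"

definition glued_le :: "('b \<Rightarrow> 'a set) \<Rightarrow> ('b \<Rightarrow> 'a \<Rightarrow> 'a \<Rightarrow> bool) \<Rightarrow> 'a \<Rightarrow> 'a \<Rightarrow> bool" where
  "glued_le L R = tranclp (\<lambda>a b. \<exists>x. a \<in> L x \<and> b \<in> L x \<and> R x a b)"

end

theory Submission
  imports Defs "HOL-Library.Dual_Ordered_Lattice"
begin


lemma po_flip: "partial_order_on' A le \<Longrightarrow> partial_order_on' A (\<lambda>a b. le b a)"
  unfolding partial_order_on'_def by blast

lemma fl_flip: "finite_length_on A le \<Longrightarrow> finite_length_on A (\<lambda>a b. le b a)"
  unfolding finite_length_on_def by blast

lemma fl_wf:
  assumes fl: "finite_length_on A le" and po: "partial_order_on' A le"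
  shows "wf {(a,b). a \<in> A \<and> b \<in> A \<and> le a b \<and> a \<noteq> b}"
proof (rule ccontr)
  have rf: "\<And>a. a \<in> A \<Longrightarrow> le a a" using po unfolding partial_order_on'_def by blast
  have an: "\<And>a b. a \<in> A \<Longrightarrow> b \<in> A \<Longrightarrow> le a b \<Longrightarrow> le b a \<Longrightarrow> a = b"
    using po unfolding partial_order_on'_def by blast
  have tr: "\<And>a b c. a \<in> A \<Longrightarrow> b \<in> A \<Longrightarrow> c \<in> A \<Longrightarrow> le a b \<Longrightarrow> le b c \<Longrightarrow> le a c"
    using po unfolding partial_order_on'_def by blast
  assume "\<not> ?thesis"
  then obtain f where f: "\<And>i. (f (Suc i), f i) \<in> {(a,b). a \<in> A \<and> b \<in> A \<and> le a b \<and> a \<noteq> b}"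
    unfolding wf_iff_no_infinite_down_chain by blast
  have inA: "f i \<in> A" for i using f[of i] by simp
  have step: "le (f (Suc i)) (f i)" "f (Suc i) \<noteq> f i" for i using f[of i] by simp_all
  have mono: "le (f i) (f j)" if "j \<le> i" for i j
    using that
  proof (induction i)
    case 0 then show ?case using rf[OF inA[of 0]] by simp
  next
    case (Suc i)
    show ?case
    proof (cases "j = Suc i")
      case True then show ?thesis using rf[OF inA] by simp
    next
      case False
      then have "j \<le> i" using Suc.prems by simp
      then have "le (f i) (f j)" using Suc.IH by simp
      then show ?thesis using tr[OF inA inA inA step(1)] by simp
    qed
  qed
  have "inj f"
  proof (rule injI)
    fix i j assume eq: "f i = f j"
    show "i = j"
    proof (rule ccontr)
      assume "i \<noteq> j"
      then consider "j < i" | "i < j" by linarith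
      then show False
      proof cases
        case 1
        then have "le (f i) (f (Suc j))" using mono by simp
        then have "le (f j) (f (Suc j))" using eq by simp
        then show False using an[OF inA inA step(1)] step(2) by metis
      next
        case 2
        then have "le (f j) (f (Suc i))" using mono by simp
        then have "le (f i) (f (Suc i))" using eq by simp
        then show False using an[OF inA inA step(1)] step(2) by metis
      qed
    qed
  qed
  then have inf: "infinite (range f)" using finite_imageD by blast
  have sub: "range f \<subseteq> A" using inA by auto
  have ch: "\<forall>a\<in>range f. \<forall>b\<in>range f. le a b \<or> le b a"
  proof (intro ballI)
    fix a b assume "a \<in> range f" "b \<in> range f"
    then obtain i j where "a = f i" "b = f j" by auto
    then show "le a b \<or> le b a" using mono[of i j] mono[of j i] nat_le_linear[of i j] by auto
  qed
  have "finite (range f)"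
    using fl sub ch unfolding finite_length_on_def by blast
  then show False using inf by contradiction
qed

lemma fl_min:
  assumes fl: "finite_length_on A le" and po: "partial_order_on' A le"
    and B: "B \<subseteq> A" "b0 \<in> B"
  shows "\<exists>b\<in>B. \<forall>c\<in>B. le c b \<longrightarrow> c = b"
proof -
  let ?r = "{(a,b). a \<in> A \<and> b \<in> A \<and> le a b \<and> a \<noteq> b}"
  have W: "wf ?r" using fl_wf[OF fl po] .
  obtain b where b1: "b \<in> B" and b2: "\<And>c. (c, b) \<in> ?r \<Longrightarrow> c \<notin> B"
    using wfE_min[OF W B(2)] by auto
  have "\<forall>c\<in>B. le c b \<longrightarrow> c = b"
  proof (intro ballI impI)
    fix c assume c: "c \<in> B" "le c b"
    show "c = b"
    proof (rule ccontr)
      assume "c \<noteq> b"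
      then have "(c, b) \<in> ?r" using c b1 B(1) by auto
      then show False using b2 c(1) by blast
    qed
  qed
  then show ?thesis using b1 by blast
qed

lemma fl_least:
  assumes L: "fl_lattice A le" and B: "B \<subseteq> A" "b0 \<in> B"
    and cl: "\<And>a b m. a \<in> B \<Longrightarrow> b \<in> B \<Longrightarrow> is_glb A le a b m \<Longrightarrow> m \<in> B"
  shows "\<exists>b\<in>B. \<forall>c\<in>B. le b c"
proof -
  have fl: "finite_length_on A le" and po: "partial_order_on' A le"
    and lat: "\<forall>a\<in>A. \<forall>b\<in>A. (\<exists>j. is_lub A le a b j) \<and> (\<exists>m. is_glb A le a b m)"
    using L unfolding fl_lattice_def is_lattice_on_def by auto
  obtain b where b: "b \<in> B" "\<And>c. c \<in> B \<Longrightarrow> le c b \<Longrightarrow> c = b" using fl_min[OF fl po B] by blast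
  have "le b c" if c: "c \<in> B" for c
  proof -
    obtain m where m: "is_glb A le b c m" using lat b(1) c B by blast
    then have "m \<in> B" using cl b(1) c by blast
    moreover have "le m b" using m unfolding is_glb_def by auto
    ultimately have "m = b" using b(2) by blast
    then show ?thesis using m unfolding is_glb_def by auto
  qed
  then show ?thesis using b by blast
qed


definition EE :: "('b \<Rightarrow> 'a set) \<Rightarrow> ('b \<Rightarrow> 'a \<Rightarrow> 'a \<Rightarrow> bool) \<Rightarrow> 'a \<Rightarrow> 'a \<Rightarrow> bool" where
  "EE L R a b \<longleftrightarrow> (\<exists>x. a \<in> L x \<and> b \<in> L x \<and> R x a b)"

locale gs =
  fixes L :: "'b::lattice \<Rightarrow> 'a set" and R :: "'b \<Rightarrow> 'a \<Rightarrow> 'a \<Rightarrow> bool"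
  assumes G: "glued_system L R"
begin

abbreviation E where "E \<equiv> EE L R"

lemmas GP0 = G[unfolded glued_system_def]
lemmas GP1 = GP0[THEN conjunct1]
lemmas GP2 = GP0[THEN conjunct2, THEN conjunct1]
lemmas GP3 = GP0[THEN conjunct2, THEN conjunct2, THEN conjunct1]
lemmas GP4 = GP0[THEN conjunct2, THEN conjunct2, THEN conjunct2, THEN conjunct1]
lemmas GP5 = GP0[THEN conjunct2, THEN conjunct2, THEN conjunct2, THEN conjunct2, THEN conjunct1]
lemmas GP6 = GP0[THEN conjunct2, THEN conjunct2, THEN conjunct2, THEN conjunct2, THEN conjunct2]

lemma finS: "finite_length_type TYPE('b)"
  by (rule GP1)

lemma flx: "fl_lattice (L x) (R x)"
  using GP2 by blast

lemma pox: "partial_order_on' (L x) (R x)"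
  using flx unfolding fl_lattice_def is_lattice_on_def by blast

lemma reflR: "a \<in> L x \<Longrightarrow> R x a a"
  using pox unfolding partial_order_on'_def by blast

lemma antiR: "a \<in> L x \<Longrightarrow> b \<in> L x \<Longrightarrow> R x a b \<Longrightarrow> R x b a \<Longrightarrow> a = b"
  using pox unfolding partial_order_on'_def by blast

lemma transR: "a \<in> L x \<Longrightarrow> b \<in> L x \<Longrightarrow> c \<in> L x \<Longrightarrow> R x a b \<Longrightarrow> R x b c \<Longrightarrow> R x a c"
proof -
  assume "a \<in> L x" "b \<in> L x" "c \<in> L x" "R x a b" "R x b c"
  moreover have "\<forall>a\<in>L x. \<forall>b\<in>L x. \<forall>c\<in>L x. R x a b \<and> R x b c \<longrightarrow> R x a c"
    using pox[of x] unfolding partial_order_on'_def by (elim conjE)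
  ultimately show "R x a c" by blast
qed

lemma lub_ex: "a \<in> L x \<Longrightarrow> b \<in> L x \<Longrightarrow> \<exists>j. is_lub (L x) (R x) a b j"
  using flx unfolding fl_lattice_def is_lattice_on_def by blast

lemma glb_ex: "a \<in> L x \<Longrightarrow> b \<in> L x \<Longrightarrow> \<exists>m. is_glb (L x) (R x) a b m"
  using flx unfolding fl_lattice_def is_lattice_on_def by blast

lemma ne: "c \<in> L x \<Longrightarrow> c \<in> L y \<Longrightarrow> L x \<inter> L y \<noteq> {}" by blast

lemma filt: "x \<le> y \<Longrightarrow> c \<in> L x \<Longrightarrow> c \<in> L y \<Longrightarrow> is_filter_on (L x) (R x) (L x \<inter> L y)"
  using GP3[rule_format, OF conjI[OF _ ne]] by blast

lemma idl: "x \<le> y \<Longrightarrow> c \<in> L x \<Longrightarrow> c \<in> L y \<Longrightarrow> is_ideal_on (L y) (R y) (L x \<inter> L y)"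
  using GP3[rule_format, OF conjI[OF _ ne]] by blast

lemma up_in: "x \<le> y \<Longrightarrow> a \<in> L x \<Longrightarrow> a \<in> L y \<Longrightarrow> b \<in> L x \<Longrightarrow> R x a b \<Longrightarrow> b \<in> L y"
proof -
  assume h: "x \<le> y" "a \<in> L x" "a \<in> L y" "b \<in> L x" "R x a b"
  have "\<forall>a\<in>L x \<inter> L y. \<forall>b\<in>L x. R x a b \<longrightarrow> b \<in> L x \<inter> L y"
    using filt[OF h(1-3)] unfolding is_filter_on_def by (elim conjE)
  then show "b \<in> L y" using h by blast
qed

lemma down_in: "x \<le> y \<Longrightarrow> b \<in> L x \<Longrightarrow> b \<in> L y \<Longrightarrow> a \<in> L y \<Longrightarrow> R y a b \<Longrightarrow> a \<in> L x"
proof -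
  assume h: "x \<le> y" "b \<in> L x" "b \<in> L y" "a \<in> L y" "R y a b"
  have "\<forall>a\<in>L x \<inter> L y. \<forall>b\<in>L y. R y b a \<longrightarrow> b \<in> L x \<inter> L y"
    using idl[OF h(1-3)] unfolding is_ideal_on_def by (elim conjE)
  then show "a \<in> L x" using h by blast
qed

lemma filt_glb: "x \<le> y \<Longrightarrow> a \<in> L x \<Longrightarrow> a \<in> L y \<Longrightarrow> b \<in> L x \<Longrightarrow> b \<in> L y
   \<Longrightarrow> is_glb (L x) (R x) a b m \<Longrightarrow> m \<in> L y"
proof -
  assume h: "x \<le> y" "a \<in> L x" "a \<in> L y" "b \<in> L x" "b \<in> L y" "is_glb (L x) (R x) a b m"
  have "\<forall>a\<in>L x \<inter> L y. \<forall>b\<in>L x \<inter> L y. \<forall>m. is_glb (L x) (R x) a b m \<longrightarrow> m \<in> L x \<inter> L y"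
    using filt[OF h(1-3)] unfolding is_filter_on_def by (elim conjE)
  then show "m \<in> L y" using h by blast
qed

lemma agree0: "x \<le> y \<Longrightarrow> a \<in> L x \<Longrightarrow> a \<in> L y \<Longrightarrow> b \<in> L x \<Longrightarrow> b \<in> L y \<Longrightarrow> R x a b = R y a b"
proof -
  assume h: "x \<le> y" "a \<in> L x" "a \<in> L y" "b \<in> L x" "b \<in> L y"
  show ?thesis using GP4[rule_format, OF conjI[OF h(1) ne[OF h(2,3)]]] h by blast
qed

lemma glue: "a \<in> L x \<Longrightarrow> a \<in> L y \<Longrightarrow> a \<in> L (inf x y) \<and> a \<in> L (sup x y)"
  using GP6 by blast

lemma agree: "a \<in> L x \<Longrightarrow> a \<in> L y \<Longrightarrow> b \<in> L x \<Longrightarrow> b \<in> L y \<Longrightarrow> R x a b = R y a b"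
proof -
  assume a: "a \<in> L x" "a \<in> L y" and b: "b \<in> L x" "b \<in> L y"
  have "a \<in> L (inf x y)" "b \<in> L (inf x y)" using glue a b by auto
  then have "R (inf x y) a b = R x a b" "R (inf x y) a b = R y a b"
    using agree0[of "inf x y" x a b] agree0[of "inf x y" y a b] a b by auto
  then show ?thesis by simp
qed

lemma cov: "covers_S x y \<Longrightarrow> \<exists>c. c \<in> L x \<and> c \<in> L y"
  using GP5 by blast

lemma wfS_less: "wf {(a, b). (a::'b) < b}"
proof -
  have "finite_length_on UNIV ((\<le>)::'b \<Rightarrow> 'b \<Rightarrow> bool)"
    using finS unfolding finite_length_type_def finite_length_on_def by blast
  moreover have "partial_order_on' UNIV ((\<le>)::'b \<Rightarrow> 'b \<Rightarrow> bool)"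
    unfolding partial_order_on'_def by auto
  ultimately have "wf {(a,b). a \<in> (UNIV::'b set) \<and> b \<in> UNIV \<and> a \<le> b \<and> a \<noteq> b}"
    by (rule fl_wf)
  moreover have "{(a,b). a \<in> (UNIV::'b set) \<and> b \<in> UNIV \<and> a \<le> b \<and> a \<noteq> b} = {(a, b). a < b}"
    by (auto simp: less_le)
  ultimately show ?thesis by simp
qed

lemma wfS_gr: "wf {(a, b). (b::'b) < a}"
proof -
  have "finite_length_on UNIV (\<lambda>a b. (b::'b) \<le> a)"
    using finS unfolding finite_length_type_def finite_length_on_def by blast
  moreover have "partial_order_on' UNIV (\<lambda>a b. (b::'b) \<le> a)"
    unfolding partial_order_on'_def by auto
  ultimately have "wf {(a,b). a \<in> (UNIV::'b set) \<and> b \<in> UNIV \<and> b \<le> a \<and> a \<noteq> b}"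
    by (rule fl_wf)
  moreover have "{(a,b). a \<in> (UNIV::'b set) \<and> b \<in> UNIV \<and> b \<le> a \<and> a \<noteq> b} = {(a, b). b < a}"
    by (auto simp: less_le)
  ultimately show ?thesis by simp
qed

lemma cover_above: "(x::'b) < z \<Longrightarrow> \<exists>z'. covers_S x z' \<and> z' \<le> z"
proof -
  assume xz: "x < z"
  have "z \<in> {t. x < t \<and> t \<le> z}" using xz by auto
  obtain t where
    t: "t \<in> {t. x < t \<and> t \<le> z}" "\<And>s. (s, t) \<in> {(a, b). a < b} \<Longrightarrow> s \<notin> {t. x < t \<and> t \<le> z}"
    using wfE_min[OF wfS_less \<open>z \<in> {t. x < t \<and> t \<le> z}\<close>] by auto
  have "covers_S x t"
    unfolding covers_S_def
  proof (intro conjI notI)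
    show "x < t" using t by auto
    assume "\<exists>s. x < s \<and> s < t"
    then obtain s where xs: "x < s" and st: "s < t" by auto
    have "s \<le> z" using t(1) st by (simp add: order_trans[OF less_imp_le])
    then have "s \<in> {t. x < t \<and> t \<le> z}" using xs by simp
    moreover have "(s, t) \<in> {(a, b). a < b}" using st by simp
    ultimately show False using t(2) by blast
  qed
  then show ?thesis using t by auto
qed

lemma cover_below: "(y::'b) < x \<Longrightarrow> \<exists>x'. y \<le> x' \<and> covers_S x' x"
proof -
  assume yx: "y < x"
  have "y \<in> {t. y \<le> t \<and> t < x}" using yx by auto
  obtain t where
    t: "t \<in> {t. y \<le> t \<and> t < x}" "\<And>s. (s, t) \<in> {(a, b). b < a} \<Longrightarrow> s \<notin> {t. y \<le> t \<and> t < x}"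
    using wfE_min[OF wfS_gr \<open>y \<in> {t. y \<le> t \<and> t < x}\<close>] by auto
  have "covers_S t x"
    unfolding covers_S_def
  proof (intro conjI notI)
    show "t < x" using t by auto
    assume "\<exists>s. t < s \<and> s < x"
    then obtain s where ts: "t < s" and sx: "s < x" by auto
    have yt: "y \<le> t" using t(1) by simp
    have "y \<le> s" using order_trans[OF yt less_imp_le[OF ts]] .
    then have "s \<in> {t. y \<le> t \<and> t < x}" using sx by simp
    moreover have "(s, t) \<in> {(a, b). b < a}" using ts by simp
    ultimately show False using t(2) by blast
  qed
  then show ?thesis using t by auto
qed

lemma convex_aux:
  shows "\<forall>w. x \<le> z \<longrightarrow> z \<le> y \<longrightarrow> w \<in> L x \<longrightarrow> w \<in> L y \<longrightarrow> w \<in> L z"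
proof (induction x rule: wf_induct_rule[OF wfS_gr])
  case (1 x)
  show ?case
  proof (intro allI impI)
    fix w assume xz: "x \<le> z" and zy: "z \<le> y" and wx: "w \<in> L x" and wy: "w \<in> L y"
    show "w \<in> L z"
    proof (cases "x = z")
      case True then show ?thesis using wx by simp
    next
      case False
      then have "x < z" using xz by simp
      then obtain z' where z': "covers_S x z'" "z' \<le> z" using cover_above by blast
      obtain c0 where c0: "c0 \<in> L x" "c0 \<in> L z'" using cov[OF z'(1)] by blast
      obtain c where c: "is_lub (L x) (R x) w c0 c" using lub_ex[OF wx c0(1)] by blast
      have xz': "x \<le> z'" "x < z'" using z'(1) unfolding covers_S_def by auto
      have cL: "c \<in> L x" "R x w c" "R x c0 c" using c unfolding is_lub_def by auto
      have cz': "c \<in> L z'" using up_in[OF xz'(1) c0(1) c0(2) cL(1) cL(3)] .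
      have xy: "x \<le> y" using order_trans[OF xz zy] .
      have cy: "c \<in> L y" using up_in[OF xy wx wy cL(1) cL(2)] .
      have "z' \<le> y" using order_trans[OF z'(2) zy] .
      then have cz: "c \<in> L z" using 1[of z'] xz' z'(2) cz' cy zy by auto
      have "R y w c" using agree[OF wx wy cL(1) cy] cL(2) by simp
      then show ?thesis using down_in[OF zy cz cy wy] by simp
    qed
  qed
qed

lemma convex: "x \<le> z \<Longrightarrow> z \<le> y \<Longrightarrow> w \<in> L x \<Longrightarrow> w \<in> L y \<Longrightarrow> w \<in> L z"
  using convex_aux[rule_format] by blast

end


context gs
begin

abbreviation lez where "lez \<equiv> E\<^sup>*\<^sup>*"

lemma E_I: "a \<in> L x \<Longrightarrow> b \<in> L x \<Longrightarrow> R x a b \<Longrightarrow> E a b"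
  unfolding EE_def by blast

lemma E_D: "E a b \<Longrightarrow> \<exists>x. a \<in> L x \<and> b \<in> L x \<and> R x a b"
  unfolding EE_def by blast

lemma lez_I: "a \<in> L x \<Longrightarrow> b \<in> L x \<Longrightarrow> R x a b \<Longrightarrow> lez a b"
  using E_I by blast

lemma carrier_iff: "a \<in> glued_carrier L \<longleftrightarrow> (\<exists>x. a \<in> L x)"
  unfolding glued_carrier_def by blast

lemma gle_def': "glued_le L R = E\<^sup>+\<^sup>+"
  unfolding glued_le_def EE_def by simp

lemma gle_iff: "a \<in> glued_carrier L \<Longrightarrow> glued_le L R a b \<longleftrightarrow> lez a b"
proof
  assume "glued_le L R a b" then show "lez a b" unfolding gle_def' by (rule tranclp_into_rtranclp)
next
  assume a: "a \<in> glued_carrier L" and l: "lez a b"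
  show "glued_le L R a b"
  proof (cases "a = b")
    case True
    obtain x where "a \<in> L x" using a carrier_iff by blast
    then have "E a a" using E_I reflR by blast
    then show ?thesis unfolding gle_def' using True by blast
  next
    case False
    then show ?thesis using l unfolding gle_def' by (metis rtranclpD)
  qed
qed

lemma gle_carrier: "glued_le L R a b \<Longrightarrow> a \<in> glued_carrier L \<and> b \<in> glued_carrier L"
  unfolding gle_def'
proof (induction rule: tranclp_induct)
  case (base y) then show ?case using E_D carrier_iff by blast
next
  case (step y z) then show ?case using E_D carrier_iff by blast
qed

lemma prop_up: "lez u t \<Longrightarrow> u \<in> L y \<Longrightarrow> \<exists>b. y \<le> b \<and> t \<in> L b"
proof (induction rule: rtranclp_induct)
  case base then show ?case by auto
next
  case (step t t')
  then obtain b where b: "y \<le> b" "t \<in> L b" by blast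
  obtain z where z: "t \<in> L z" "t' \<in> L z" "R z t t'" using E_D[OF step(2)] by blast
  have "t \<in> L (sup b z)" using glue[OF b(2) z(1)] by blast
  then have "t' \<in> L (sup b z)" using up_in[of z "sup b z" t t'] z by simp
  moreover have "y \<le> sup b z" using b(1) le_supI1 by blast
  ultimately show ?case by blast
qed

lemma prop_down: "lez u t \<Longrightarrow> t \<in> L x \<Longrightarrow> \<exists>b. b \<le> x \<and> u \<in> L b"
proof (induction rule: converse_rtranclp_induct)
  case base then show ?case by auto
next
  case (step u u')
  then obtain b where b: "b \<le> x" "u' \<in> L b" by blast
  obtain z where z: "u \<in> L z" "u' \<in> L z" "R z u u'" using E_D[OF step(1)] by blast
  have "u' \<in> L (inf b z)" using glue[OF b(2) z(2)] by blast
  then have "u \<in> L (inf b z)" using down_in[of "inf b z" z u' u] z by simp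
  moreover have "inf b z \<le> x" using b(1) le_infI1 by blast
  ultimately show ?case by blast
qed

lemma between: "u \<in> L x \<Longrightarrow> v \<in> L x \<Longrightarrow> lez u w \<Longrightarrow> lez w v \<Longrightarrow> w \<in> L x"
proof -
  assume h: "u \<in> L x" "v \<in> L x" "lez u w" "lez w v"
  obtain b1 where b1: "x \<le> b1" "w \<in> L b1" using prop_up[OF h(3) h(1)] by blast
  obtain b0 where b0: "b0 \<le> x" "w \<in> L b0" using prop_down[OF h(4) h(2)] by blast
  show ?thesis using convex[OF b0(1) b1(1) b0(2) b1(2)] .
qed

lemma lez_R_aux: "lez u v \<Longrightarrow> \<forall>x. u \<in> L x \<longrightarrow> v \<in> L x \<longrightarrow> R x u v"
proof (induction rule: rtranclp_induct)
  case base then show ?case using reflR by blast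
next
  case (step w v)
  show ?case
  proof (intro allI impI)
    fix x assume u: "u \<in> L x" and v: "v \<in> L x"
    have "w \<in> L x" using between[OF u v step(1) r_into_rtranclp[of E, OF step(2)]] .
    then have uw: "R x u w" using step(3) u by blast
    obtain z where z: "w \<in> L z" "v \<in> L z" "R z w v" using E_D[OF step(2)] by blast
    have "R x w v" using agree[OF \<open>w \<in> L x\<close> z(1) v z(2)] z(3) by simp
    then show "R x u v" using transR[OF u \<open>w \<in> L x\<close> v uw] by simp
  qed
qed

lemma lez_R: "lez u v \<Longrightarrow> u \<in> L x \<Longrightarrow> v \<in> L x \<Longrightarrow> R x u v"
  by (rule lez_R_aux[rule_format])

lemma lez_antisym: "lez u v \<Longrightarrow> lez v u \<Longrightarrow> u \<in> L x \<Longrightarrow> u = v"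
proof -
  assume h: "lez u v" "lez v u" "u \<in> L x"
  have v: "v \<in> L x" using between[OF h(3) h(3) h(1) h(2)] .
  show "u = v" using antiR[OF h(3) v lez_R[OF h(1) h(3) v] lez_R[OF h(2) v h(3)]] .
qed

lemma first_step: "E\<^sup>+\<^sup>+ a b \<Longrightarrow> a \<noteq> b \<Longrightarrow> \<exists>t. E a t \<and> t \<noteq> a \<and> lez t b"
proof (induction rule: converse_tranclp_induct)
  case (base y) then show ?case by (intro exI[of _ b]) simp
next
  case (step y z)
  show ?case
  proof (cases "z = y")
    case True then show ?thesis using step(3,4) by simp
  next
    case False then show ?thesis using step(1,2) by (intro exI[of _ z]) (simp add: tranclp_into_rtranclp)
  qed
qed

end


context gs
begin

abbreviation C where "C \<equiv> glued_carrier L"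
abbreviation gle where "gle \<equiv> glued_le L R"

lemma gle_lez: "gle a b \<Longrightarrow> lez a b"
  unfolding gle_def' by (rule tranclp_into_rtranclp)

lemma lez_gle: "a \<in> L x \<Longrightarrow> lez a b \<Longrightarrow> gle a b"
  using gle_iff carrier_iff by blast

lemma cover_block: "covers_in C gle a b \<Longrightarrow> E a b"
proof -
  assume c: "covers_in C gle a b"
  then have ab: "gle a b" "a \<noteq> b" "a \<in> C" "b \<in> C"
    and no: "\<not> (\<exists>d\<in>C. gle a d \<and> gle d b \<and> d \<noteq> a \<and> d \<noteq> b)"
    unfolding covers_in_def by blast+
  obtain t where t: "E a t" "t \<noteq> a" "lez t b"
    using first_step[OF ab(1)[unfolded gle_def'] ab(2)] by blast
  obtain x where x: "t \<in> L x" using E_D[OF t(1)] by blast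
  have tC: "t \<in> C" using x carrier_iff by blast
  have "gle a t" using t(1) unfolding gle_def' by blast
  moreover have "gle t b" if "t \<noteq> b" using lez_gle[OF x t(3)] .
  ultimately have "t = b" using no tC t(2) by blast
  then show "E a b" using t(1) by simp
qed

lemma cover_to_local: "covers_in C gle a b \<Longrightarrow> a \<in> L z \<Longrightarrow> b \<in> L z \<Longrightarrow> covers_in (L z) (R z) a b"
proof -
  assume c: "covers_in C gle a b" and a: "a \<in> L z" and b: "b \<in> L z"
  then have ab: "gle a b" "a \<noteq> b"
    and no: "\<not> (\<exists>d\<in>C. gle a d \<and> gle d b \<and> d \<noteq> a \<and> d \<noteq> b)"
    unfolding covers_in_def by blast+
  have "R z a b" using lez_R[OF gle_lez[OF ab(1)] a b] .
  moreover have "\<not> (\<exists>d\<in>L z. R z a d \<and> R z d b \<and> d \<noteq> a \<and> d \<noteq> b)"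
  proof
    assume "\<exists>d\<in>L z. R z a d \<and> R z d b \<and> d \<noteq> a \<and> d \<noteq> b"
    then obtain d where d: "d \<in> L z" "R z a d" "R z d b" "d \<noteq> a" "d \<noteq> b" by blast
    have "gle a d" using lez_gle[OF a lez_I[OF a d(1) d(2)]] .
    moreover have "gle d b" using lez_gle[OF d(1) lez_I[OF d(1) b d(3)]] .
    moreover have "d \<in> C" using d(1) carrier_iff by blast
    ultimately show False using no d(4,5) by blast
  qed
  ultimately show ?thesis using a b ab(2) unfolding covers_in_def by blast
qed

lemma local_to_cover: "covers_in (L z) (R z) a b \<Longrightarrow> covers_in C gle a b"
proof -
  assume c: "covers_in (L z) (R z) a b"
  then have a: "a \<in> L z" and b: "b \<in> L z" and ab: "R z a b" "a \<noteq> b"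
    and no: "\<not> (\<exists>d\<in>L z. R z a d \<and> R z d b \<and> d \<noteq> a \<and> d \<noteq> b)"
    unfolding covers_in_def by blast+
  have "gle a b" using lez_gle[OF a lez_I[OF a b ab(1)]] .
  moreover have "\<not> (\<exists>d\<in>C. gle a d \<and> gle d b \<and> d \<noteq> a \<and> d \<noteq> b)"
  proof
    assume "\<exists>d\<in>C. gle a d \<and> gle d b \<and> d \<noteq> a \<and> d \<noteq> b"
    then obtain d where d: "gle a d" "gle d b" "d \<noteq> a" "d \<noteq> b" by blast
    have dz: "d \<in> L z" using between[OF a b gle_lez[OF d(1)] gle_lez[OF d(2)]] .
    have "R z a d" using lez_R[OF gle_lez[OF d(1)] a dz] .
    moreover have "R z d b" using lez_R[OF gle_lez[OF d(2)] dz b] .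
    ultimately show False using no dz d(3,4) by blast
  qed
  moreover have "a \<in> C" "b \<in> C" using a b carrier_iff by blast+
  ultimately show ?thesis using ab(2) unfolding covers_in_def by blast
qed

lemma semimod: assumes SM: "\<And>x. semimodular_on (L x) (R x)"
  shows "semimodular_on C gle"
  unfolding semimodular_on_def
proof (intro allI impI, elim conjE)
  fix a b c j
  assume cab: "covers_in C gle a b" and cac: "covers_in C gle a c" and bc: "b \<noteq> c"
    and j: "is_lub C gle b c j"
  obtain x where x: "a \<in> L x" "b \<in> L x" "R x a b" using E_D[OF cover_block[OF cab]] by blast
  obtain y where y: "a \<in> L y" "c \<in> L y" "R y a c" using E_D[OF cover_block[OF cac]] by blast
  define z where "z = sup x y"
  have az: "a \<in> L z" using glue[OF x(1) y(1)] z_def by blast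
  have bz: "b \<in> L z" using up_in[of x z a b] az x z_def by simp
  have cz: "c \<in> L z" using up_in[of y z a c] az y z_def by simp
  have lab: "covers_in (L z) (R z) a b" using cover_to_local[OF cab az bz] .
  have lac: "covers_in (L z) (R z) a c" using cover_to_local[OF cac az cz] .
  obtain j' where j': "is_lub (L z) (R z) b c j'" using lub_ex[OF bz cz] by blast
  have sm: "covers_in (L z) (R z) b j' \<and> covers_in (L z) (R z) c j'"
    using SM[of z] lab lac bc j' unfolding semimodular_on_def by blast
  have j'z: "j' \<in> L z" and bj': "R z b j'" and cj': "R z c j'" using j' unfolding is_lub_def by blast+
  have "gle b j'" using lez_gle[OF bz lez_I[OF bz j'z bj']] .
  moreover have "gle c j'" using lez_gle[OF cz lez_I[OF cz j'z cj']] .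
  moreover have "j' \<in> C" using j'z carrier_iff by blast
  ultimately have jj': "gle j j'" using j unfolding is_lub_def by blast
  have bj: "gle b j" and cj: "gle c j" and jC: "j \<in> C" using j unfolding is_lub_def by blast+
  have jz: "j \<in> L z" using between[OF bz j'z gle_lez[OF bj] gle_lez[OF jj']] .
  have Rbj: "R z b j" using lez_R[OF gle_lez[OF bj] bz jz] .
  have Rjj': "R z j j'" using lez_R[OF gle_lez[OF jj'] jz j'z] .
  have "j = j'"
  proof (rule ccontr)
    assume "j \<noteq> j'"
    have nb: "\<not> (\<exists>d\<in>L z. R z b d \<and> R z d j' \<and> d \<noteq> b \<and> d \<noteq> j')"
      using sm unfolding covers_in_def by blast
    then have "j = b" using jz Rbj Rjj' \<open>j \<noteq> j'\<close> by blast
    then have "R z c b" using lez_R[OF gle_lez[OF cj] cz jz] by simp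
    moreover have "R z a c" "c \<noteq> a" using lac unfolding covers_in_def by blast+
    moreover have "\<not> (\<exists>d\<in>L z. R z a d \<and> R z d b \<and> d \<noteq> a \<and> d \<noteq> b)"
      using lab unfolding covers_in_def by blast
    ultimately show False using cz bc by blast
  qed
  then show "covers_in C gle b j \<and> covers_in C gle c j"
    using sm local_to_cover by blast
qed

end


context gs
begin

lemma lemK:
  "lez u t \<Longrightarrow> \<forall>y y'. y \<le> y' \<longrightarrow> u \<in> L y \<longrightarrow> (\<exists>f. f \<in> L y \<and> f \<in> L y') \<longrightarrow>
      (\<exists>z. y' \<le> z \<and> t \<in> L z) \<longrightarrow> (\<exists>r. r \<in> L y \<and> r \<in> L y' \<and> R y u r \<and> lez r t)"
proof (induction rule: converse_rtranclp_induct)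
  case base
  show ?case
  proof (intro allI impI)
    fix y y' assume yy': "y \<le> y'" and ty: "t \<in> L y"
      and ex: "\<exists>z. y' \<le> z \<and> t \<in> L z"
    then obtain z where z: "y' \<le> z" "t \<in> L z" by blast
    have "t \<in> L y'" using convex[OF yy' z(1) ty z(2)] .
    then show "\<exists>r. r \<in> L y \<and> r \<in> L y' \<and> R y t r \<and> lez r t" using ty reflR by blast
  qed
next
  case (step u d)
  show ?case
  proof (intro allI impI)
    fix y y' assume yy': "y \<le> y'" and uy: "u \<in> L y"
      and exf: "\<exists>f. f \<in> L y \<and> f \<in> L y'" and ex: "\<exists>z. y' \<le> z \<and> t \<in> L z"
    obtain f where f: "f \<in> L y" "f \<in> L y'" using exf by blast
    obtain z where z: "y' \<le> z" "t \<in> L z" using ex by blast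
    obtain w where w: "u \<in> L w" "d \<in> L w" "R w u d" using E_D[OF step(1)] by blast
    define z0 where "z0 = sup y w"
    have yz0: "y \<le> z0" and wz0: "w \<le> z0" unfolding z0_def by simp_all
    have uz0: "u \<in> L z0" using glue[OF uy w(1)] z0_def by blast
    have dz0: "d \<in> L z0" using up_in[OF wz0 w(1) uz0 w(2) w(3)] .
    have Rud: "R z0 u d" using agree[OF w(1) uz0 w(2) dz0] w(3) by simp
    obtain p where p: "is_lub (L y) (R y) u f p" using lub_ex[OF uy f(1)] by blast
    have py: "p \<in> L y" and Rup: "R y u p" and Rfp: "R y f p" using p unfolding is_lub_def by blast+
    have py': "p \<in> L y'" using up_in[OF yy' f(1) f(2) py Rfp] .
    have pz0: "p \<in> L z0" using up_in[OF yz0 uy uz0 py Rup] .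
    define y'' where "y'' = sup z0 y'"
    have z0y'': "z0 \<le> y''" and y'y'': "y' \<le> y''" unfolding y''_def by simp_all
    have py'': "p \<in> L y''" using glue[OF pz0 py'] y''_def by blast
    obtain b where b: "z0 \<le> b" "t \<in> L b" using prop_up[OF step(2) dz0] by blast
    have tb: "t \<in> L (sup b z)" using glue[OF b(2) z(2)] by blast
    have "y'' \<le> sup b z" unfolding y''_def using b(1) z(1) by (simp add: le_supI1 le_supI2 sup_mono)
    then obtain r' where r': "r' \<in> L z0" "r' \<in> L y''" "R z0 d r'" "lez r' t"
      using step(3)[rule_format, OF z0y'' dz0] pz0 py'' tb by blast
    obtain r where r: "is_glb (L z0) (R z0) p r' r" using glb_ex[OF pz0 r'(1)] by blast
    have rz0: "r \<in> L z0" and Rrp: "R z0 r p" and Rrr': "R z0 r r'" using r unfolding is_glb_def by blast+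
    have ry'': "r \<in> L y''" using filt_glb[OF z0y'' pz0 py'' r'(1) r'(2) r] .
    have ry: "r \<in> L y" using down_in[OF yz0 py pz0 rz0 Rrp] .
    have ry': "r \<in> L y'" using convex[OF yy' y'y'' ry ry''] .
    have Rup0: "R z0 u p" using agree[OF uy uz0 py pz0] Rup by simp
    have Rur': "R z0 u r'" using transR[OF uz0 dz0 r'(1) Rud r'(3)] .
    have "R z0 u r" using r Rup0 Rur' uz0 unfolding is_glb_def by blast
    then have Rur: "R y u r" using agree[OF uy uz0 ry rz0] by simp
    have "lez r t" using lez_I[OF rz0 r'(1) Rrr'] r'(4) by (rule rtranclp_trans)
    then show "\<exists>r. r \<in> L y \<and> r \<in> L y' \<and> R y u r \<and> lez r t" using ry ry' Rur by blast
  qed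
qed

lemma UB_aux: "\<forall>u. u \<in> L y \<longrightarrow> y \<le> z \<longrightarrow> (\<exists>c. c \<in> L z \<and> lez u c)"
proof (induction y rule: wf_induct_rule[OF wfS_gr])
  case (1 y)
  show ?case
  proof (intro allI impI)
    fix u assume uy: "u \<in> L y" and yz: "y \<le> z"
    show "\<exists>c. c \<in> L z \<and> lez u c"
    proof (cases "y = z")
      case True then show ?thesis using uy by blast
    next
      case False
      then have "y < z" using yz by simp
      then obtain y' where y': "covers_S y y'" "y' \<le> z" using cover_above by blast
      have yy': "y \<le> y'" "y < y'" using y'(1) unfolding covers_S_def by auto
      obtain f where f: "f \<in> L y" "f \<in> L y'" using cov[OF y'(1)] by blast
      obtain p where p: "is_lub (L y) (R y) u f p" using lub_ex[OF uy f(1)] by blast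
      have py: "p \<in> L y" and Rup: "R y u p" and Rfp: "R y f p" using p unfolding is_lub_def by blast+
      have py': "p \<in> L y'" using up_in[OF yy'(1) f(1) f(2) py Rfp] .
      obtain c where c: "c \<in> L z" "lez p c" using 1[of y'] yy'(2) py' y'(2) by blast
      have "lez u c" using lez_I[OF uy py Rup] c(2) by (rule rtranclp_trans)
      then show ?thesis using c(1) by blast
    qed
  qed
qed

lemma UB: "u \<in> L y \<Longrightarrow> y \<le> z \<Longrightarrow> \<exists>c. c \<in> L z \<and> lez u c"
  by (rule UB_aux[rule_format])

lemma lemM_aux:
  assumes c1: "c1 \<in> L x" and c2: "c2 \<in> L x" and m: "is_glb (L x) (R x) c1 c2 m"
  shows "\<forall>u. u \<in> L y \<longrightarrow> y \<le> x \<longrightarrow> lez u c1 \<longrightarrow> lez u c2 \<longrightarrow> lez u m"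
proof (induction y rule: wf_induct_rule[OF wfS_gr])
  case (1 y)
  show ?case
  proof (intro allI impI)
    fix u assume uy: "u \<in> L y" and yx: "y \<le> x" and u1: "lez u c1" and u2: "lez u c2"
    have mx: "m \<in> L x" using m unfolding is_glb_def by blast
    show "lez u m"
    proof (cases "y = x")
      case True
      then have ux: "u \<in> L x" using uy by simp
      have "R x u c1" "R x u c2" using lez_R[OF u1 ux c1] lez_R[OF u2 ux c2] .
      then have "R x u m" using m ux unfolding is_glb_def by blast
      then show ?thesis using lez_I[OF ux mx] by blast
    next
      case False
      then have "y < x" using yx by simp
      then obtain y' where y': "covers_S y y'" "y' \<le> x" using cover_above by blast
      have yy': "y \<le> y'" "y < y'" using y'(1) unfolding covers_S_def by auto
      have exf: "\<exists>f. f \<in> L y \<and> f \<in> L y'" using cov[OF y'(1)] by blast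
      obtain r1 where r1: "r1 \<in> L y" "r1 \<in> L y'" "R y u r1" "lez r1 c1"
        using lemK[OF u1, rule_format, OF yy'(1) uy exf] y'(2) c1 by blast
      obtain r2 where r2: "r2 \<in> L y" "r2 \<in> L y'" "R y u r2" "lez r2 c2"
        using lemK[OF u2, rule_format, OF yy'(1) uy exf] y'(2) c2 by blast
      obtain r where r: "is_glb (L y) (R y) r1 r2 r" using glb_ex[OF r1(1) r2(1)] by blast
      have ry: "r \<in> L y" and R1: "R y r r1" and R2: "R y r r2" using r unfolding is_glb_def by blast+
      have ry': "r \<in> L y'" using filt_glb[OF yy'(1) r1(1) r1(2) r2(1) r2(2) r] .
      have Rur: "R y u r" using r r1(3) r2(3) uy unfolding is_glb_def by blast
      have rc1: "lez r c1" using lez_I[OF ry r1(1) R1] r1(4) by (rule rtranclp_trans)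
      have rc2: "lez r c2" using lez_I[OF ry r2(1) R2] r2(4) by (rule rtranclp_trans)
      have "lez r m" using 1[of y'] yy'(2) ry' y'(2) rc1 rc2 by blast
      then show ?thesis by (rule rtranclp_trans[OF lez_I[OF uy ry Rur]])
    qed
  qed
qed

lemma lemM: "c1 \<in> L x \<Longrightarrow> c2 \<in> L x \<Longrightarrow> is_glb (L x) (R x) c1 c2 m \<Longrightarrow> lez u c1 \<Longrightarrow> lez u c2 \<Longrightarrow> lez u m"
proof -
  assume h: "c1 \<in> L x" "c2 \<in> L x" "is_glb (L x) (R x) c1 c2 m" "lez u c1" "lez u c2"
  obtain y where "y \<le> x" "u \<in> L y" using prop_down[OF h(4) h(1)] by blast
  then show "lez u m" using lemM_aux[OF h(1-3), rule_format] h(4,5) by blast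
qed

definition least_above where
  "least_above x u c \<longleftrightarrow> c \<in> L x \<and> lez u c \<and> (\<forall>c'\<in>L x. lez u c' \<longrightarrow> R x c c')"

lemma up_ex: "c0 \<in> L x \<Longrightarrow> lez u c0 \<Longrightarrow> \<exists>c. least_above x u c"
proof -
  assume c0: "c0 \<in> L x" "lez u c0"
  have "\<exists>b\<in>{c \<in> L x. lez u c}. \<forall>c\<in>{c \<in> L x. lez u c}. R x b c"
  proof (rule fl_least[OF flx])
    show "{c \<in> L x. lez u c} \<subseteq> L x" by blast
    show "c0 \<in> {c \<in> L x. lez u c}" using c0 by blast
    fix a b m assume "a \<in> {c \<in> L x. lez u c}" "b \<in> {c \<in> L x. lez u c}" "is_glb (L x) (R x) a b m"
    then show "m \<in> {c \<in> L x. lez u c}" using lemM[of a x b m u] unfolding is_glb_def by blast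
  qed
  then show ?thesis unfolding least_above_def by blast
qed

lemma up_ex': "u \<in> L y \<Longrightarrow> y \<le> x \<Longrightarrow> \<exists>c. least_above x u c"
  using UB[of u y x] up_ex[of _ x u] by blast

lemma lemU_aux:
  assumes xz: "x \<le> z" and tz: "t \<in> L z"
  shows "\<forall>u c. u \<in> L y \<longrightarrow> y \<le> x \<longrightarrow> lez u t \<longrightarrow> least_above x u c \<longrightarrow> lez c t"
proof (induction y rule: wf_induct_rule[OF wfS_gr])
  case (1 y)
  show ?case
  proof (intro allI impI)
    fix u c assume uy: "u \<in> L y" and yx: "y \<le> x" and ut: "lez u t" and c: "least_above x u c"
    have cx: "c \<in> L x" and cmin: "\<forall>c'\<in>L x. lez u c' \<longrightarrow> R x c c'"
      using c unfolding least_above_def by blast+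
    show "lez c t"
    proof (cases "y = x")
      case True
      then have ux: "u \<in> L x" using uy by simp
      have "R x c u" using cmin ux by blast
      then show ?thesis using rtranclp_trans[OF lez_I[OF cx ux] ut] by blast
    next
      case False
      then have "y < x" using yx by simp
      then obtain y' where y': "covers_S y y'" "y' \<le> x" using cover_above by blast
      have yy': "y \<le> y'" "y < y'" using y'(1) unfolding covers_S_def by auto
      have exf: "\<exists>f. f \<in> L y \<and> f \<in> L y'" using cov[OF y'(1)] by blast
      have "y' \<le> z" using order_trans[OF y'(2) xz] .
      then obtain r where r: "r \<in> L y" "r \<in> L y'" "R y u r" "lez r t"
        using lemK[OF ut, rule_format, OF yy'(1) uy exf] tz by blast
      obtain cr where cr: "least_above x r cr" using up_ex'[OF r(2) y'(2)] by blast
      have crt: "lez cr t" using 1[of y'] yy'(2) r(2) y'(2) r(4) cr by blast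
      have crx: "cr \<in> L x" and rcr: "lez r cr" using cr unfolding least_above_def by blast+
      have "lez u cr" using lez_I[OF uy r(1) r(3)] rcr by (rule rtranclp_trans)
      then have "R x c cr" using cmin crx by blast
      then show ?thesis using rtranclp_trans[OF lez_I[OF cx crx] crt] by blast
    qed
  qed
qed

lemma lemU: "least_above x u c \<Longrightarrow> u \<in> L y \<Longrightarrow> y \<le> x \<Longrightarrow> x \<le> z \<Longrightarrow> t \<in> L z \<Longrightarrow> lez u t \<Longrightarrow> lez c t"
  by (rule lemU_aux[rule_format]) assumption+

end


lemma is_lub_flip: "is_lub A (\<lambda>a b. le b a) a b j = is_glb A le a b j"
  unfolding is_lub_def is_glb_def by simp

lemma is_glb_flip: "is_glb A (\<lambda>a b. le b a) a b j = is_lub A le a b j"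
  unfolding is_lub_def is_glb_def by simp

lemma filter_flip: "is_filter_on A (\<lambda>a b. le b a) F = is_ideal_on A le F"
  unfolding is_filter_on_def is_ideal_on_def is_glb_flip by simp

lemma ideal_flip: "is_ideal_on A (\<lambda>a b. le b a) F = is_filter_on A le F"
  unfolding is_filter_on_def is_ideal_on_def is_lub_flip by simp

lemma fl_lattice_flip: "fl_lattice A le \<Longrightarrow> fl_lattice A (\<lambda>a b. le b a)"
proof -
  assume h: "fl_lattice A le"
  note hh = h[unfolded fl_lattice_def is_lattice_on_def]
  have ne: "A \<noteq> {}" by (rule conjunct1[OF hh])
  have po: "partial_order_on' A le" by (rule conjunct1[OF conjunct1[OF conjunct2[OF hh]]])
  have lat: "\<forall>a\<in>A. \<forall>b\<in>A. (\<exists>j. is_lub A le a b j) \<and> (\<exists>m. is_glb A le a b m)"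
    by (rule conjunct2[OF conjunct1[OF conjunct2[OF hh]]])
  have fl: "finite_length_on A le" by (rule conjunct2[OF conjunct2[OF hh]])
  have po': "partial_order_on' A (\<lambda>a b. le b a)" by (rule po_flip[OF po])
  have fl': "finite_length_on A (\<lambda>a b. le b a)" by (rule fl_flip[OF fl])
  have lat': "\<forall>a\<in>A. \<forall>b\<in>A. (\<exists>j. is_lub A (\<lambda>a b. le b a) a b j) \<and> (\<exists>m. is_glb A (\<lambda>a b. le b a) a b m)"
  proof (intro ballI conjI)
    fix a b assume "a \<in> A" "b \<in> A"
    then have l1: "\<exists>j. is_lub A le a b j" and l2: "\<exists>m. is_glb A le a b m" using lat by blast+
    show "\<exists>j. is_lub A (\<lambda>a b. le b a) a b j" using l2 by (simp only: is_lub_flip)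
    show "\<exists>m. is_glb A (\<lambda>a b. le b a) a b m" using l1 by (simp only: is_glb_flip)
  qed
  show ?thesis unfolding fl_lattice_def is_lattice_on_def by (intro conjI ne po' fl' lat')
qed

lemma covers_S_dual: "covers_S (x::'b::order dual) y \<longleftrightarrow> covers_S (undual y) (undual x)"
proof -
  have "(\<exists>z::'b dual. x < z \<and> z < y) \<longleftrightarrow> (\<exists>z'. undual y < z' \<and> z' < undual x)"
  proof
    assume "\<exists>z::'b dual. x < z \<and> z < y"
    then obtain z where "x < z" "z < y" by blast
    then have "undual y < undual z \<and> undual z < undual x" by (simp add: dual_less_iff)
    then show "\<exists>z'. undual y < z' \<and> z' < undual x" by blast
  next
    assume "\<exists>z'. undual y < z' \<and> z' < undual x"
    then obtain z' where z': "undual y < z'" "z' < undual x" by blast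
    have "x < dual z' \<and> dual z' < y" using z' by (simp add: dual_less_iff)
    then show "\<exists>z::'b dual. x < z \<and> z < y" by blast
  qed
  note H = this
  show ?thesis unfolding covers_S_def dual_less_iff[of x y] by (simp only: H)
qed

lemma flt_dual: "finite_length_type TYPE('b::lattice) \<Longrightarrow> finite_length_type TYPE('b dual)"
  unfolding finite_length_type_def
proof (intro allI impI)
  fix C :: "'b dual set"
  assume fin: "\<forall>C::'b set. (\<forall>x\<in>C. \<forall>y\<in>C. x \<le> y \<or> y \<le> x) \<longrightarrow> finite C"
    and ch: "\<forall>x\<in>C. \<forall>y\<in>C. x \<le> y \<or> y \<le> x"
  have "\<forall>x\<in>undual ` C. \<forall>y\<in>undual ` C. x \<le> y \<or> y \<le> x"
    using ch by (auto simp: dual_less_eq_iff)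
  then have "finite (undual ` C)" by (rule mp[OF spec[OF fin]])
  then show "finite C" by (rule finite_imageD[OF _ inj_on_subset[OF inj_undual subset_UNIV]])
qed

lemma glued_le_EE: "glued_le L R = (EE L R)\<^sup>+\<^sup>+"
  unfolding glued_le_def EE_def by simp

definition dL :: "('b \<Rightarrow> 'a set) \<Rightarrow> 'b dual \<Rightarrow> 'a set" where
  "dL L x = L (undual x)"

definition dR :: "('b \<Rightarrow> 'a \<Rightarrow> 'a \<Rightarrow> bool) \<Rightarrow> 'b dual \<Rightarrow> 'a \<Rightarrow> 'a \<Rightarrow> bool" where
  "dR R x a b = R (undual x) b a"

context gs
begin

lemma dual_gs: "gs (dL L) (dR R)"
proof
  show "glued_system (dL L) (dR R)"
    unfolding glued_system_def
  proof (intro conjI allI impI)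
    show "finite_length_type TYPE('b dual)" using flt_dual[OF finS] .
  next
    fix x :: "'b dual"
    show "fl_lattice (dL L x) (dR R x)"
      unfolding dL_def dR_def[abs_def] using fl_lattice_flip[OF flx] by simp
  next
    fix x y :: "'b dual"
    assume h: "x \<le> y \<and> dL L x \<inter> dL L y \<noteq> {}"
    then have yx: "undual y \<le> undual x" by (simp add: dual_less_eq_iff)
    obtain c where c: "c \<in> L (undual x)" "c \<in> L (undual y)" using h unfolding dL_def by blast
    have "is_ideal_on (L (undual x)) (R (undual x)) (L (undual y) \<inter> L (undual x))"
      using idl[OF yx c(2) c(1)] .
    then show "is_filter_on (dL L x) (dR R x) (dL L x \<inter> dL L y)"
      unfolding dL_def dR_def[abs_def] filter_flip by (simp add: Int_commute)
  next
    fix x y :: "'b dual"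
    assume h: "x \<le> y \<and> dL L x \<inter> dL L y \<noteq> {}"
    then have yx: "undual y \<le> undual x" by (simp add: dual_less_eq_iff)
    obtain c where c: "c \<in> L (undual x)" "c \<in> L (undual y)" using h unfolding dL_def by blast
    have "is_filter_on (L (undual y)) (R (undual y)) (L (undual y) \<inter> L (undual x))"
      using filt[OF yx c(2) c(1)] .
    then show "is_ideal_on (dL L y) (dR R y) (dL L x \<inter> dL L y)"
      unfolding dL_def dR_def[abs_def] ideal_flip by (simp add: Int_commute)
  next
    fix x y :: "'b dual"
    show "\<forall>a\<in>dL L x \<inter> dL L y. \<forall>b\<in>dL L x \<inter> dL L y. dR R x a b = dR R y a b"
      unfolding dL_def dR_def
    proof (intro ballI)
      fix a b assume a: "a \<in> L (undual x) \<inter> L (undual y)" and b: "b \<in> L (undual x) \<inter> L (undual y)"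
      show "R (undual x) b a = R (undual y) b a"
        using agree[of b "undual x" "undual y" a] a b by blast
    qed
  next
    fix x y :: "'b dual"
    assume "covers_S x y"
    then have "covers_S (undual y) (undual x)" using covers_S_dual by blast
    then obtain c where "c \<in> L (undual y)" "c \<in> L (undual x)" using cov by blast
    then show "dL L x \<inter> dL L y \<noteq> {}" unfolding dL_def by blast
  next
    fix x y :: "'b dual"
    show "dL L x \<inter> dL L y \<subseteq> dL L (inf x y) \<inter> dL L (sup x y)"
    proof
      fix a assume "a \<in> dL L x \<inter> dL L y"
      then have "a \<in> L (undual x)" "a \<in> L (undual y)" unfolding dL_def by auto
      then have "a \<in> L (inf (undual x) (undual y)) \<and> a \<in> L (sup (undual x) (undual y))"
        by (rule glue)
      then show "a \<in> dL L (inf x y) \<inter> dL L (sup x y)" unfolding dL_def by simp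
    qed
  qed
qed

lemma EE_dual: "EE (dL L) (dR R) = (EE L R)\<inverse>\<inverse>"
proof (intro ext iffI)
  fix a b
  assume "EE (dL L) (dR R) a b"
  then obtain x where x: "a \<in> dL L x" "b \<in> dL L x" "dR R x a b" unfolding EE_def by blast
  then have "b \<in> L (undual x) \<and> a \<in> L (undual x) \<and> R (undual x) b a" unfolding dL_def dR_def by simp
  then have "EE L R b a" unfolding EE_def by blast
  then show "(EE L R)\<inverse>\<inverse> a b" by simp
next
  fix a b
  assume "(EE L R)\<inverse>\<inverse> a b"
  then have "EE L R b a" by simp
  then obtain x where "a \<in> L x" "b \<in> L x" "R x b a" unfolding EE_def by blast
  then have "a \<in> dL L (dual x) \<and> b \<in> dL L (dual x) \<and> dR R (dual x) a b"
    unfolding dL_def dR_def by simp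
  then show "EE (dL L) (dR R) a b" unfolding EE_def by blast
qed

lemma lez_dual: "(EE (dL L) (dR R))\<^sup>*\<^sup>* a b \<longleftrightarrow> lez b a"
  by (simp only: EE_dual rtranclp_conversep conversep_iff)

lemma gle_dual: "glued_le (dL L) (dR R) a b \<longleftrightarrow> gle b a"
  by (simp only: glued_le_EE EE_dual tranclp_converse conversep_iff)

lemma carrier_dual: "glued_carrier (dL L) = C"
  unfolding glued_carrier_def dL_def
proof (intro set_eqI iffI)
  fix a assume "a \<in> \<Union> (range (\<lambda>x. L (undual x)))"
  then obtain x where "a \<in> L (undual x)" by blast
  then show "a \<in> \<Union> (range L)" by (rule UnionI[OF rangeI])
next
  fix a assume "a \<in> \<Union> (range L)"
  then obtain x where "a \<in> L x" by blast
  then have "a \<in> L (undual (dual x))" by simp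
  then show "a \<in> \<Union> (range (\<lambda>x. L (undual x)))" by (rule UnionI[OF rangeI])
qed

lemma lemJ: "c1 \<in> L x \<Longrightarrow> c2 \<in> L x \<Longrightarrow> is_lub (L x) (R x) c1 c2 j \<Longrightarrow> lez c1 u \<Longrightarrow> lez c2 u \<Longrightarrow> lez j u"
proof -
  assume h: "c1 \<in> L x" "c2 \<in> L x" "is_lub (L x) (R x) c1 c2 j" "lez c1 u" "lez c2 u"
  have a: "c1 \<in> dL L (dual x)" "c2 \<in> dL L (dual x)" using h(1,2) unfolding dL_def by simp_all
  have b: "is_glb (dL L (dual x)) (dR R (dual x)) c1 c2 j"
    using h(3) unfolding dL_def dR_def[abs_def] is_glb_flip by simp
  have "(EE (dL L) (dR R))\<^sup>*\<^sup>* u j"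
    using gs.lemM[OF dual_gs a b] h(4,5) unfolding lez_dual by blast
  then show "lez j u" unfolding lez_dual .
qed

end


context gs
begin

lemma glub: "a \<in> C \<Longrightarrow> b \<in> C \<Longrightarrow> \<exists>j. is_lub C gle a b j"
proof -
  assume aC: "a \<in> C" and bC: "b \<in> C"
  obtain ya where ya: "a \<in> L ya" using aC carrier_iff by blast
  obtain yb where yb: "b \<in> L yb" using bC carrier_iff by blast
  define z where "z = sup ya yb"
  have yaz: "ya \<le> z" and ybz: "yb \<le> z" unfolding z_def by simp_all
  obtain ca where ca: "least_above z a ca" using up_ex'[OF ya yaz] by blast
  obtain cb where cb: "least_above z b cb" using up_ex'[OF yb ybz] by blast
  have caz: "ca \<in> L z" and aca: "lez a ca" using ca unfolding least_above_def by blast+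
  have cbz: "cb \<in> L z" and bcb: "lez b cb" using cb unfolding least_above_def by blast+
  obtain j where j: "is_lub (L z) (R z) ca cb j" using lub_ex[OF caz cbz] by blast
  have jz: "j \<in> L z" and Raj: "R z ca j" and Rbj: "R z cb j" using j unfolding is_lub_def by blast+
  have jC: "j \<in> C" using jz carrier_iff by blast
  have "lez a j" using rtranclp_trans[OF aca lez_I[OF caz jz Raj]] .
  then have gaj: "gle a j" using lez_gle[OF ya] by blast
  have "lez b j" using rtranclp_trans[OF bcb lez_I[OF cbz jz Rbj]] .
  then have gbj: "gle b j" using lez_gle[OF yb] by blast
  have "gle j u" if uC: "u \<in> C" and au: "gle a u" and bu: "gle b u" for u
  proof -
    have au': "lez a u" and bu': "lez b u" using gle_lez au bu by blast+
    obtain ba where ba: "ya \<le> ba" "u \<in> L ba" using prop_up[OF au' ya] by blast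
    obtain bb where bb: "yb \<le> bb" "u \<in> L bb" using prop_up[OF bu' yb] by blast
    have uz: "u \<in> L (sup ba bb)" using glue[OF ba(2) bb(2)] by blast
    have zz: "z \<le> sup ba bb" unfolding z_def using ba(1) bb(1) by (rule sup_mono)
    have "lez ca u" using lemU[OF ca ya yaz zz uz au'] .
    moreover have "lez cb u" using lemU[OF cb yb ybz zz uz bu'] .
    ultimately have "lez j u" using lemJ[OF caz cbz j] by blast
    then show "gle j u" using lez_gle[OF jz] by blast
  qed
  then have "is_lub C gle a b j" unfolding is_lub_def using jC gaj gbj by blast
  then show ?thesis by blast
qed

lemma gle_dual_fun: "glued_le (dL L) (dR R) = (\<lambda>a b. gle b a)"
  using gle_dual by (intro ext) blast

lemma gglb: "a \<in> C \<Longrightarrow> b \<in> C \<Longrightarrow> \<exists>m. is_glb C gle a b m"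
proof -
  assume "a \<in> C" "b \<in> C"
  then have "\<exists>j. is_lub (glued_carrier (dL L)) (glued_le (dL L) (dR R)) a b j"
    using gs.glub[OF dual_gs] unfolding carrier_dual by blast
  then show ?thesis unfolding carrier_dual gle_dual_fun is_lub_flip .
qed

lemma breadth:
  assumes BR: "\<And>x. breadth_le (L x) (R x) n"
  shows "breadth_le C gle n"
  unfolding breadth_le_def
proof (intro allI impI, elim conjE)
  fix m and \<phi> :: "nat set \<Rightarrow> 'a"
  assume phiC: "\<forall>X. X \<subseteq> {0..<m} \<longrightarrow> \<phi> X \<in> C"
    and phiO: "\<forall>X Y. X \<subseteq> {0..<m} \<and> Y \<subseteq> {0..<m} \<longrightarrow> gle (\<phi> X) (\<phi> Y) = (X \<subseteq> Y)"
  define I where "I = {0..<m}"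
  define e where "e i = \<phi> {i}" for i
  have eC: "e i \<in> C" if "i < m" for i using phiC that unfolding e_def by auto
  have qC: "\<phi> I \<in> C" using phiC unfolding I_def by blast
  obtain xq where xq: "\<phi> I \<in> L xq" using qC carrier_iff by blast
  have eq: "lez (e i) (\<phi> I)" if "i < m" for i
    using gle_lez phiO that unfolding e_def I_def by auto
  define Xs where "Xs = {x. \<exists>c\<in>L x. \<forall>i<m. lez (e i) c}"
  have "xq \<in> Xs" unfolding Xs_def using xq eq by blast
  then obtain x where x: "x \<in> Xs" and xmin: "\<And>x'. (x', x) \<in> {(a, b). a < b} \<Longrightarrow> x' \<notin> Xs"
    using wfE_min[OF wfS_less \<open>xq \<in> Xs\<close>] by auto
  define B where "B = {c \<in> L x. \<forall>i<m. lez (e i) c}"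
  obtain c0 where c0: "c0 \<in> B" using x unfolding Xs_def B_def by blast
  have "\<exists>s\<in>B. \<forall>c\<in>B. R x s c"
  proof (rule fl_least[OF flx])
    show "B \<subseteq> L x" unfolding B_def by blast
    show "c0 \<in> B" by (rule c0)
    fix a b mm assume "a \<in> B" "b \<in> B" "is_glb (L x) (R x) a b mm"
    then show "mm \<in> B" unfolding B_def using lemM[of a x b mm] unfolding is_glb_def by blast
  qed
  then obtain s where sB: "s \<in> B" and smin: "\<And>c. c \<in> B \<Longrightarrow> R x s c" by blast
  have sx: "s \<in> L x" and es: "\<And>i. i < m \<Longrightarrow> lez (e i) s" using sB unfolding B_def by blast+
  have sC: "s \<in> C" using sx carrier_iff by blast
  have key: "\<exists>t. t \<in> L x \<and> (\<forall>i<m. i \<noteq> j \<longrightarrow> lez (e i) t) \<and> \<not> lez (e j) t" if jm: "j < m" for j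
  proof -
    define w where "w = \<phi> (I - {j})"
    have wC: "w \<in> C" using phiC unfolding w_def I_def by blast
    obtain v where v: "is_glb C gle w s v" using gglb[OF wC sC] by blast
    have vC: "v \<in> C" and vw: "gle v w" and vs: "gle v s" using v unfolding is_glb_def by blast+
    have ev: "lez (e i) v" if "i < m" "i \<noteq> j" for i
    proof -
      have "gle (e i) w" using phiO that unfolding e_def w_def I_def by auto
      moreover have "gle (e i) s" using es[OF \<open>i < m\<close>] eC[OF \<open>i < m\<close>] gle_iff by blast
      ultimately have "gle (e i) v" using v eC[OF \<open>i < m\<close>] unfolding is_glb_def by blast
      then show ?thesis using gle_lez by blast
    qed
    have nev: "\<not> lez (e j) v"
    proof
      assume "lez (e j) v"
      then have "gle (e j) v" using gle_iff eC[OF jm] by blast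
      then have "gle (e j) w" using vw unfolding gle_def' by (rule tranclp_trans)
      then have "{j} \<subseteq> I - {j}" using phiO jm unfolding e_def w_def I_def by auto
      then show False by blast
    qed
    have vs': "lez v s" using gle_lez[OF vs] .
    obtain t where t: "least_above x v t" using up_ex[OF sx vs'] by blast
    have tx: "t \<in> L x" and vt: "lez v t" and tmin: "\<forall>c'\<in>L x. lez v c' \<longrightarrow> R x t c'"
      using t unfolding least_above_def by blast+
    have "\<not> lez (e j) t"
    proof
      assume ejt: "lez (e j) t"
      have "\<forall>i<m. lez (e i) t"
      proof (intro allI impI)
        fix i assume "i < m"
        show "lez (e i) t"
        proof (cases "i = j")
          case True then show ?thesis using ejt by simp
        next
          case False then show ?thesis using rtranclp_trans[OF ev[OF \<open>i < m\<close> False] vt] by blast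
        qed
      qed
      then have "t \<in> B" unfolding B_def using tx by blast
      then have "R x s t" using smin by blast
      moreover have "R x t s" using tmin sx vs' by blast
      ultimately have ts: "t = s" using antiR[OF sx tx] by blast
      obtain y where y: "y \<le> x" "v \<in> L y" using prop_down[OF vs' sx] by blast
      show False
      proof (cases "y = x")
        case True
        then have "v \<in> L x" using y by simp
        then have "R x t v" using tmin by blast
        then have "lez t v" using lez_I[OF tx \<open>v \<in> L x\<close>] by blast
        then have "lez (e j) v" using rtranclp_trans[OF ejt] by blast
        then show False using nev by blast
      next
        case False
        then have "y < x" using y(1) by simp
        then obtain x' where x': "y \<le> x'" "covers_S x' x" using cover_below by blast
        have x'x: "x' \<le> x" "x' < x" using x'(2) unfolding covers_S_def by auto
        obtain c where c: "c \<in> L x'" "lez v c" using UB[OF y(2) x'(1)] by blast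
        obtain f0 where f0: "f0 \<in> L x'" "f0 \<in> L x" using cov[OF x'(2)] by blast
        obtain c' where c': "is_lub (L x') (R x') c f0 c'" using lub_ex[OF c(1) f0(1)] by blast
        have c'x': "c' \<in> L x'" and cc': "R x' c c'" and fc': "R x' f0 c'" using c' unfolding is_lub_def by blast+
        have c'x: "c' \<in> L x" using up_in[OF x'x(1) f0(1) f0(2) c'x' fc'] .
        have "lez v c'" using rtranclp_trans[OF c(2) lez_I[OF c(1) c'x' cc']] .
        then have "R x t c'" using tmin c'x by blast
        then have "t \<in> L x'" using down_in[OF x'x(1) c'x' c'x tx] by blast
        then have "s \<in> L x'" using ts by simp
        then have "x' \<in> Xs" unfolding Xs_def using es by blast
        moreover have "(x', x) \<in> {(a, b). a < b}" using x'x(2) by simp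
        ultimately show False using xmin by blast
      qed
    qed
    moreover have "\<forall>i<m. i \<noteq> j \<longrightarrow> lez (e i) t"
      using ev vt by (blast intro: rtranclp_trans)
    ultimately show ?thesis using tx by blast
  qed
  then have "\<forall>j. \<exists>t. j < m \<longrightarrow> t \<in> L x \<and> (\<forall>i<m. i \<noteq> j \<longrightarrow> lez (e i) t) \<and> \<not> lez (e j) t"
    by blast
  then obtain T where T0: "\<forall>j. j < m \<longrightarrow> T j \<in> L x \<and> (\<forall>i<m. i \<noteq> j \<longrightarrow> lez (e i) (T j)) \<and> \<not> lez (e j) (T j)"
    using choice[of "\<lambda>j t. j < m \<longrightarrow> t \<in> L x \<and> (\<forall>i<m. i \<noteq> j \<longrightarrow> lez (e i) t) \<and> \<not> lez (e j) t"] by blast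
  have T: "T j \<in> L x \<and> (\<forall>i<m. i \<noteq> j \<longrightarrow> lez (e i) (T j)) \<and> \<not> lez (e j) (T j)" if "j < m" for j
    using T0 that by blast
  have "\<forall>i. \<exists>c. i < m \<longrightarrow> least_above x (e i) c" using up_ex[OF sx es] by blast
  then obtain E' where E'0: "\<forall>i. i < m \<longrightarrow> least_above x (e i) (E' i)"
    using choice[of "\<lambda>i c. i < m \<longrightarrow> least_above x (e i) c"] by blast
  have E': "least_above x (e i) (E' i)" if "i < m" for i using E'0 that by blast
  have E'x: "E' i \<in> L x" if "i < m" for i using E'[OF that] unfolding least_above_def by blast
  have E's: "R x (E' i) s" if "i < m" for i using E'[OF that] sx es[OF that] unfolding least_above_def by blast
  have SE1: "R x (E' i) (T j)" if "i < m" "j < m" "i \<noteq> j" for i j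
    using E'[OF that(1)] T[OF that(2)] that unfolding least_above_def by blast
  have SE2: "\<not> R x (E' j) (T j)" if "j < m" for j
  proof
    assume "R x (E' j) (T j)"
    then have "lez (E' j) (T j)" using lez_I E'x[OF that] T[OF that] by blast
    moreover have "lez (e j) (E' j)" using E'[OF that] unfolding least_above_def by blast
    ultimately have "lez (e j) (T j)" by (rule rtranclp_trans[rotated])
    then show False using T[OF that] by blast
  qed
  define Bx where "Bx X = {c \<in> L x. \<forall>i\<in>X. R x (E' i) c}" for X
  have psi_ex: "\<exists>p\<in>Bx X. \<forall>c\<in>Bx X. R x p c" if XI: "X \<subseteq> I" for X
  proof (rule fl_least[OF flx])
    show "Bx X \<subseteq> L x" unfolding Bx_def by blast
    show "s \<in> Bx X" unfolding Bx_def using sx E's XI unfolding I_def by auto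
    fix a b mm assume "a \<in> Bx X" "b \<in> Bx X" "is_glb (L x) (R x) a b mm"
    then show "mm \<in> Bx X" unfolding Bx_def is_glb_def using E'x XI unfolding I_def by auto
  qed
  define psi where "psi X = (SOME p. p \<in> Bx X \<and> (\<forall>c\<in>Bx X. R x p c))" for X
  have psi: "psi X \<in> Bx X \<and> (\<forall>c\<in>Bx X. R x (psi X) c)" if "X \<subseteq> I" for X
    unfolding psi_def using someI_ex[OF psi_ex[OF that, unfolded Bex_def]] by blast
  have "m \<le> n"
    using BR[of x] unfolding breadth_le_def
  proof (elim allE[of _ m] allE[of _ psi] mp, intro conjI allI impI)
    fix X assume "X \<subseteq> {0..<m}"
    then show "psi X \<in> L x" using psi unfolding I_def Bx_def by blast
  next
    fix X Y assume XY: "X \<subseteq> {0..<m} \<and> Y \<subseteq> {0..<m}"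
    then have XI: "X \<subseteq> I" and YI: "Y \<subseteq> I" unfolding I_def by auto
    show "R x (psi X) (psi Y) = (X \<subseteq> Y)"
    proof
      assume R: "R x (psi X) (psi Y)"
      show "X \<subseteq> Y"
      proof
        fix j assume jX: "j \<in> X"
        show "j \<in> Y"
        proof (rule ccontr)
          assume jY: "j \<notin> Y"
          have jm: "j < m" using jX XI unfolding I_def by auto
          have "T j \<in> Bx Y" unfolding Bx_def
          proof (intro CollectI conjI ballI)
            show "T j \<in> L x" using T[OF jm] by blast
            fix i assume "i \<in> Y"
            then have "i < m" "i \<noteq> j" using YI jY unfolding I_def by auto
            then show "R x (E' i) (T j)" using SE1 jm by blast
          qed
          then have "R x (psi Y) (T j)" using psi[OF YI] by blast
          moreover have "R x (E' j) (psi X)" using psi[OF XI] jX unfolding Bx_def by blast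
          moreover have "psi X \<in> L x" "psi Y \<in> L x" using psi XI YI unfolding Bx_def by blast+
          ultimately have "R x (E' j) (T j)"
            using transR[OF E'x[OF jm] \<open>psi X \<in> L x\<close> \<open>psi Y \<in> L x\<close> _ R]
              transR[OF E'x[OF jm] \<open>psi Y \<in> L x\<close> conjunct1[OF T[OF jm]]] by blast
          then show False using SE2[OF jm] by blast
        qed
      qed
    next
      assume "X \<subseteq> Y"
      then have "psi Y \<in> Bx X" using psi[OF YI] unfolding Bx_def by blast
      then show "R x (psi X) (psi Y)" using psi[OF XI] by blast
    qed
  qed
  then show "m \<le> n" .
qed

end


theorem theorem3p3:
  fixes n :: nat
    and L :: "'b::lattice \<Rightarrow> 'a set"
    and R :: "'b \<Rightarrow> 'a \<Rightarrow> 'a \<Rightarrow> bool"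
  assumes "glued_system L R"
    and "\<And>x. semimodular_on (L x) (R x)"
    and "\<And>x. breadth_le (L x) (R x) n"
  shows "semimodular_on (glued_carrier L) (glued_le L R)
     \<and> breadth_le (glued_carrier L) (glued_le L R) n"
proof -
  interpret gs L R by (rule gs.intro) (rule assms(1))
  show ?thesis using semimod[OF assms(2)] breadth[OF assms(3)] by blast
qed


end
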